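(* Assume the KLS conjecture (stated in the context) holds. Let $(k_n)_{n\in\mathbb N}$ be a sequence of integers with $1\le k_n\le n$ and $k_n\to\infty$, and let $(\xi_n)_{n\in\mathbb N}$ be a sequence of random vectors such that each $\xi_n$ is an isotropic log-concave random vector in $\mathbb R^{k_n}$. Put $X_n:=\|\xi_n\|_2/\sqrt{k_n}$ and suppose that $(X_n)_{n\in\mathbb N}$ satisfies a large deviation principle on $\mathbb R$ with speed $(s_n)_{n\in\mathbb N}$ and rate function $\mathbb I$. Then neither of the following two conditions can hold: (a) $s_n/\sqrt{k_n}\to 0$ as $n\to\infty$ and $\mathbb I\neq \mathbb I_0$, where $\mathbb I_0(1)=0$ and $\mathbb I_0(x)=\infty$ for $x\neq 1$; (b) there are absolute constants $0<c\le C<\infty$ with $c\sqrt{k_n}\le s_n\le C\sqrt{k_n}$ for all $n$, and there is a constant $t_0\in(1,\infty)$ such that \[ \inf_{t>t_0}\frac{\inf_{x\in(t,\infty)}\mathbb I(x)}{t}=0 . \] In other words, the existence of such a sequence satisfying (a) or (b) would disprove the KLS conjecture.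
   Context: A random vector $\xi$ in $\mathbb R^k$ is isotropic if $\mathbb E\xi=0$ and $\mathbb E[\xi\xi^T]=\mathrm{Id}_k$; it is log-concave if its distribution has a log-concave density (or, more generally, is a log-concave measure). Large deviation principle: for a sequence $s_n\uparrow\infty$ of positive reals and a lower semicontinuous function $\mathbb I:\mathbb R\to[0,\infty]$ not identically $\infty$, a sequence of real random variables $(X_n)$ satisfies an LDP with speed $s_n$ and rate function $\mathbb I$ if for every Borel set $A\subset\mathbb R$, $-\inf_{x\in A^\circ}\mathbb I(x)\le\liminf_{n}\frac1{s_n}\log\mathbb P[X_n\in A]\le\limsup_n\frac1{s_n}\log\mathbb P[X_n\in A]\le-\inf_{x\in\overline A}\mathbb I(x)$. KLS conjecture: there exists an absolute constant $C\in(0,\infty)$ such that for every $d\in\mathbb N$, every centered random vector $X$ in $\mathbb R^d$ with log-concave distribution, and every locally Lipschitz $f:\mathbb R^d\to\mathbb R$ with $f(X)$ of finite variance, $\mathrm{Var}[f(X)]\le C\lambda_X^2\,\mathbb E\|\nabla f(X)\|_2^2$, where $\lambda_X^2:=\sup_{\theta\in S^{d-1}}\mathbb E\langle X,\theta\rangle^2$. (Known consequence used: the KLS conjecture implies an absolute constant $C>0$ such that for every isotropic log-concave $\xi$ in $\mathbb R^k$ and all $t>0$, $\mathbb P[|\|\xi\|_2/\sqrt k-1|>t]\le 2e^{-Ct\sqrt k}$.) *)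

theory Defs
  imports "HOL-Probability.Probability"
begin

text \<open>The space R^d is represented by explicit carriers: vectors are
  functions of type nat => real that are extensional on the index set {..<d}
  (i.e. elements of PiE {..<d} (%_. UNIV)), with Borel sigma-algebra given by the
  product measurable space below. The natural numbers of the paper are {1,2,...}.\<close>

definition Rsp :: "nat \<Rightarrow> (nat \<Rightarrow> real) measure" where
  "Rsp d = PiM {..<d} (\<lambda>_. borel)"

definition vnorm :: "nat \<Rightarrow> (nat \<Rightarrow> real) \<Rightarrow> real" where
  "vnorm d x = sqrt (\<Sum>i<d. (x i)\<^sup>2)"

definition vinner :: "nat \<Rightarrow> (nat \<Rightarrow> real) \<Rightarrow> (nat \<Rightarrow> real) \<Rightarrow> real" where
  "vinner d x y = (\<Sum>i<d. x i * y i)"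

definition vsphere :: "nat \<Rightarrow> (nat \<Rightarrow> real) set" where
  "vsphere d = {\<theta> \<in> space (Rsp d). vnorm d \<theta> = 1}"

definition log_concave_measure :: "nat \<Rightarrow> (nat \<Rightarrow> real) measure \<Rightarrow> bool" where
  "log_concave_measure d \<mu> \<longleftrightarrow>
     prob_space \<mu> \<and> sets \<mu> = sets (Rsp d) \<and>
     (\<forall>K L l. K \<subseteq> space (Rsp d) \<and> L \<subseteq> space (Rsp d) \<and> K \<noteq> {} \<and> L \<noteq> {} \<and>
        compact K \<and> compact L \<and> 0 < l \<and> l < 1 \<longrightarrow>
        measure \<mu> {restrict (\<lambda>i. l * x i + (1 - l) * y i) {..<d} | x y. x \<in> K \<and> y \<in> L}
          \<ge> measure \<mu> K powr l * measure \<mu> L powr (1 - l))"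

definition centered :: "nat \<Rightarrow> (nat \<Rightarrow> real) measure \<Rightarrow> bool" where
  "centered d \<mu> \<longleftrightarrow> (\<forall>i<d. integrable \<mu> (\<lambda>x. x i) \<and> (\<integral>x. x i \<partial>\<mu>) = 0)"

definition isotropic :: "nat \<Rightarrow> (nat \<Rightarrow> real) measure \<Rightarrow> bool" where
  "isotropic d \<mu> \<longleftrightarrow> centered d \<mu> \<and>
     (\<forall>i<d. \<forall>j<d. integrable \<mu> (\<lambda>x. x i * x j) \<and>
        (\<integral>x. x i * x j \<partial>\<mu>) = (if i = j then 1 else 0))"

definition locally_lipschitz :: "nat \<Rightarrow> ((nat \<Rightarrow> real) \<Rightarrow> real) \<Rightarrow> bool" where
  "locally_lipschitz d f \<longleftrightarrow>
     (\<forall>x\<in>space (Rsp d). \<exists>r>0. \<exists>L. \<forall>y\<in>space (Rsp d). \<forall>z\<in>space (Rsp d).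
        vnorm d (\<lambda>i. y i - x i) < r \<and> vnorm d (\<lambda>i. z i - x i) < r \<longrightarrow>
        \<bar>f y - f z\<bar> \<le> L * vnorm d (\<lambda>i. y i - z i))"

text \<open>Length of the gradient of a locally Lipschitz f at x, in the standard sense
  |grad f|(x) = limsup_{y -> x} |f y - f x| / |y - x| (this equals the Euclidean norm
  of the gradient at every point where f is differentiable).\<close>
definition grad_norm :: "nat \<Rightarrow> ((nat \<Rightarrow> real) \<Rightarrow> real) \<Rightarrow> (nat \<Rightarrow> real) \<Rightarrow> real" where
  "grad_norm d f x = real_of_ereal
     (Limsup (at x within space (Rsp d))
        (\<lambda>y. ereal (\<bar>f y - f x\<bar> / vnorm d (\<lambda>i. y i - x i))))"

text \<open>The KLS conjecture, as stated in the paper (with X given by its distribution mu).\<close>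
definition KLS_conjecture :: bool where
  "KLS_conjecture \<longleftrightarrow>
     (\<exists>C::real. 0 < C \<and>
        (\<forall>(d::nat) (\<mu>::(nat \<Rightarrow> real) measure) (f::(nat \<Rightarrow> real) \<Rightarrow> real).
           log_concave_measure d \<mu> \<and> centered d \<mu> \<and> locally_lipschitz d f \<and>
           integrable \<mu> (\<lambda>x. (f x)\<^sup>2) \<longrightarrow>
           ennreal (\<integral>x. (f x - (\<integral>y. f y \<partial>\<mu>))\<^sup>2 \<partial>\<mu>)
             \<le> ennreal C * (SUP \<theta>\<in>vsphere d. \<integral>\<^sup>+x. ennreal ((vinner d x \<theta>)\<^sup>2) \<partial>\<mu>)
                 * (\<integral>\<^sup>+x. ennreal ((grad_norm d f x)\<^sup>2) \<partial>\<mu>)))"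

definition elog :: "real \<Rightarrow> ereal" where
  "elog p = (if p = 0 then -\<infinity> else ereal (ln p))"

definition LDP :: "(nat \<Rightarrow> 'a measure) \<Rightarrow> (nat \<Rightarrow> 'a \<Rightarrow> real) \<Rightarrow> (nat \<Rightarrow> real)
                    \<Rightarrow> (real \<Rightarrow> ereal) \<Rightarrow> bool" where
  "LDP \<Omega> X s I \<longleftrightarrow>
     (\<forall>n\<ge>1. 0 < s n) \<and> (\<forall>n m. 1 \<le> n \<and> n \<le> m \<longrightarrow> s n \<le> s m) \<and>
     filterlim s at_top sequentially \<and>
     (\<forall>x. 0 \<le> I x) \<and> (\<forall>a. closed {x. I x \<le> a}) \<and> (\<exists>x. I x \<noteq> \<infinity>) \<and>
     (\<forall>A \<in> sets borel.
        - (INF x\<in>interior A. I x)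
          \<le> liminf (\<lambda>n. ereal (1 / s n) * elog (measure (\<Omega> n) {\<omega>\<in>space (\<Omega> n). X n \<omega> \<in> A})) \<and>
        limsup (\<lambda>n. ereal (1 / s n) * elog (measure (\<Omega> n) {\<omega>\<in>space (\<Omega> n). X n \<omega> \<in> A}))
          \<le> - (INF x\<in>closure A. I x))"

end

theory Submission
  imports Defs
begin


lemma vnorm_L2: "vnorm d x = L2_set x {..<d}"
  by (simp add: vnorm_def L2_set_def)

lemma vnorm_nonneg: "0 \<le> vnorm d x"
  by (simp add: vnorm_def sum_nonneg)

lemma vnorm_lip: "\<bar>vnorm d y - vnorm d z\<bar> \<le> vnorm d (\<lambda>i. y i - z i)"
proof -
  have 1: "vnorm d y \<le> vnorm d (\<lambda>i. y i - z i) + vnorm d z"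
    using L2_set_triangle_ineq[of "\<lambda>i. y i - z i" z "{..<d}"] by (simp add: vnorm_L2)
  have 2: "vnorm d z \<le> vnorm d (\<lambda>i. y i - z i) + vnorm d y"
    using L2_set_triangle_ineq[of "\<lambda>i. z i - y i" y "{..<d}"]
    by (simp add: vnorm_L2 L2_set_def power2_commute)
  show ?thesis using 1 2 by linarith
qed

lemma vnorm_cont_tendsto: "((\<lambda>y. vnorm d (\<lambda>i. y i - x i)) \<longlongrightarrow> 0) (at x within S)"
proof -
  have "continuous_on UNIV (\<lambda>y::nat\<Rightarrow>real. vnorm d (\<lambda>i. y i - x i))"
    unfolding vnorm_def
    by (intro continuous_intros continuous_on_product_then_coordinatewise continuous_on_id)
  then have "((\<lambda>y. vnorm d (\<lambda>i. y i - x i)) \<longlongrightarrow> vnorm d (\<lambda>i. x i - x i)) (at x within S)"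
    by (meson UNIV_I continuous_on_def tendsto_within_subset top_greatest)
  then show ?thesis by (simp add: vnorm_def)
qed

lemma vnorm_eventually: "r > 0 \<Longrightarrow> eventually (\<lambda>y. vnorm d (\<lambda>i. y i - x i) < r) (at x within S)"
  using order_tendstoD(2)[OF vnorm_cont_tendsto] by blast

lemma vnorm_meas[measurable]: "vnorm d \<in> borel_measurable (Rsp d)"
  unfolding vnorm_def[abs_def] Rsp_def by measurable

lemma comp_meas[measurable]: "i < d \<Longrightarrow> (\<lambda>x. x i) \<in> borel_measurable (Rsp d)"
  unfolding Rsp_def by measurable

lemma limsup_real_bound:
  fixes F and X :: "'b \<Rightarrow> real"
  assumes "\<And>y. 0 \<le> X y" "\<And>y. X y \<le> B"
  shows "0 \<le> real_of_ereal (Limsup F (\<lambda>y. ereal (X y)))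
       \<and> real_of_ereal (Limsup F (\<lambda>y. ereal (X y))) \<le> B"
proof (cases "F = bot")
  case True then show ?thesis using assms(1)[of undefined] assms(2)[of undefined] by (simp add: bot_ereal_def)
next
  case False
  have a: "ereal 0 \<le> Limsup F (\<lambda>y. ereal (X y))"
    by (rule le_Limsup[OF False]) (simp add: assms)
  have b: "Limsup F (\<lambda>y. ereal (X y)) \<le> ereal B"
    by (rule Limsup_bounded) (simp add: assms)
  from a b show ?thesis
    by (cases "Limsup F (\<lambda>y. ereal (X y))") auto
qed



locale kls = prob_space \<mu> for \<mu> :: "(nat \<Rightarrow> real) measure" +
  fixes d :: nat and C :: real
  assumes sets_eq: "sets \<mu> = sets (Rsp d)"
    and iso: "isotropic d \<mu>"
    and Cpos: "0 < C"
    and kls_ineq: "\<And>f. locally_lipschitz d f \<Longrightarrow> integrable \<mu> (\<lambda>x. (f x)\<^sup>2) \<Longrightarrow>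
           ennreal (\<integral>x. (f x - (\<integral>y. f y \<partial>\<mu>))\<^sup>2 \<partial>\<mu>)
             \<le> ennreal C * (SUP \<theta>\<in>vsphere d. \<integral>\<^sup>+x. ennreal ((vinner d x \<theta>)\<^sup>2) \<partial>\<mu>)
                 * (\<integral>\<^sup>+x. ennreal ((grad_norm d f x)\<^sup>2) \<partial>\<mu>)"
begin

lemma space_eq: "space \<mu> = space (Rsp d)"
  using sets_eq_imp_space_eq[OF sets_eq] .

lemma meas_cong: "f \<in> borel_measurable (Rsp d) \<Longrightarrow> f \<in> borel_measurable \<mu>"
  using measurable_cong_sets[OF sets_eq refl] by blast

lemma int_ij: "i < d \<Longrightarrow> j < d \<Longrightarrow> integrable \<mu> (\<lambda>x. x i * x j)"
  using iso unfolding isotropic_def by blast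

lemma E_ij: "i < d \<Longrightarrow> j < d \<Longrightarrow> (\<integral>x. x i * x j \<partial>\<mu>) = (if i = j then 1 else 0)"
  using iso unfolding isotropic_def by blast

lemma S_le1: "(SUP \<theta>\<in>vsphere d. \<integral>\<^sup>+x. ennreal ((vinner d x \<theta>)\<^sup>2) \<partial>\<mu>) \<le> 1"
proof (rule SUP_least)
  fix \<theta> assume th: "\<theta> \<in> vsphere d"
  have s1: "(\<Sum>i<d. (\<theta> i)\<^sup>2) = 1"
    using th unfolding vsphere_def vnorm_def by auto
  have eq: "\<And>x. (vinner d x \<theta>)\<^sup>2 = (\<Sum>i<d. \<Sum>j<d. (\<theta> i * \<theta> j) * (x i * x j))"
    unfolding vinner_def power2_eq_square sum_product by (intro sum.cong refl) (simp add: algebra_simps)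
  have int: "integrable \<mu> (\<lambda>x. \<Sum>i<d. \<Sum>j<d. (\<theta> i * \<theta> j) * (x i * x j))"
    by (intro Bochner_Integration.integrable_sum Bochner_Integration.integrable_mult_right int_ij) auto
  have "(\<integral>x. (\<Sum>i<d. \<Sum>j<d. (\<theta> i * \<theta> j) * (x i * x j)) \<partial>\<mu>)
      = (\<Sum>i<d. \<Sum>j<d. (\<theta> i * \<theta> j) * (\<integral>x. x i * x j \<partial>\<mu>))"
    by (subst Bochner_Integration.integral_sum)
       (auto intro!: Bochner_Integration.integrable_sum Bochner_Integration.integrable_mult_right int_ij sum.cong
        simp: Bochner_Integration.integral_sum int_ij)
  also have "\<dots> = (\<Sum>i<d. \<Sum>j<d. (\<theta> i * \<theta> j) * (if i = j then 1 else 0))"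
    by (intro sum.cong refl) (simp add: E_ij)
  also have "\<dots> = 1" using s1 by (simp add: power2_eq_square if_distrib sum.delta cong: if_cong)
  finally have "(\<integral>x. (vinner d x \<theta>)\<^sup>2 \<partial>\<mu>) = 1" by (simp add: eq)
  moreover have "(\<integral>\<^sup>+x. ennreal ((vinner d x \<theta>)\<^sup>2) \<partial>\<mu>) = ennreal (\<integral>x. (vinner d x \<theta>)\<^sup>2 \<partial>\<mu>)"
  proof (rule nn_integral_eq_integral)
    show "integrable \<mu> (\<lambda>x. (vinner d x \<theta>)\<^sup>2)" using int by (simp add: eq)
  qed simp
  ultimately show "(\<integral>\<^sup>+x. ennreal ((vinner d x \<theta>)\<^sup>2) \<partial>\<mu>) \<le> 1" by simp
qed


lemma limsup_real_bound':
  fixes X :: "'b \<Rightarrow> real"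
  assumes "\<And>y. 0 \<le> X y" "eventually (\<lambda>y. X y \<le> B) F" "0 \<le> B"
  shows "0 \<le> real_of_ereal (Limsup F (\<lambda>y. ereal (X y)))
       \<and> real_of_ereal (Limsup F (\<lambda>y. ereal (X y))) \<le> B"
proof (cases "F = bot")
  case True then show ?thesis using assms by (simp add: bot_ereal_def)
next
  case False
  have a: "ereal 0 \<le> Limsup F (\<lambda>y. ereal (X y))"
    by (rule le_Limsup[OF False]) (simp add: assms)
  have b: "Limsup F (\<lambda>y. ereal (X y)) \<le> ereal B"
    by (rule Limsup_bounded) (use assms(2) in \<open>auto elim!: eventually_mono\<close>)
  from a b show ?thesis
    by (cases "Limsup F (\<lambda>y. ereal (X y))") auto
qed

lemma clamp_lip: "\<bar>min 1 (max 0 a) - min 1 (max 0 b)\<bar> \<le> \<bar>a - b\<bar>" for a b :: real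
  by (simp add: min_def max_def abs_if)

lemma step:
  fixes \<phi> :: "(nat \<Rightarrow> real) \<Rightarrow> real" and t h :: real
  assumes phi_meas[measurable]: "\<phi> \<in> borel_measurable (Rsp d)"
    and lip: "\<And>y z. y \<in> space (Rsp d) \<Longrightarrow> z \<in> space (Rsp d) \<Longrightarrow> \<bar>\<phi> y - \<phi> z\<bar> \<le> vnorm d (\<lambda>i. y i - z i)"
    and h: "h > 0"
  shows "prob {x\<in>space \<mu>. \<phi> x \<le> t} * prob {x\<in>space \<mu>. \<phi> x \<ge> t + h}
          \<le> C / h\<^sup>2 * prob {x\<in>space \<mu>. \<phi> x \<ge> t}"
proof -
  define f where "f x = min 1 (max 0 ((\<phi> x - t) / h))" for x
  have f01: "0 \<le> f x \<and> f x \<le> 1" for x by (simp add: f_def)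
  have flip: "\<bar>f y - f z\<bar> \<le> vnorm d (\<lambda>i. y i - z i) / h"
    if "y \<in> space (Rsp d)" "z \<in> space (Rsp d)" for y z
  proof -
    have "\<bar>f y - f z\<bar> \<le> \<bar>(\<phi> y - t) / h - (\<phi> z - t) / h\<bar>"
      unfolding f_def by (rule clamp_lip)
    also have "\<dots> = \<bar>\<phi> y - \<phi> z\<bar> / h" using h by (simp add: diff_divide_distrib[symmetric])
    also have "\<dots> \<le> vnorm d (\<lambda>i. y i - z i) / h"
      using lip[OF that] h by (simp add: divide_right_mono)
    finally show ?thesis .
  qed
  have ll: "locally_lipschitz d f"
    unfolding locally_lipschitz_def
  proof (intro ballI)
    fix x assume "x \<in> space (Rsp d)"
    have "\<forall>y\<in>space (Rsp d). \<forall>z\<in>space (Rsp d). \<bar>f y - f z\<bar> \<le> 1 / h * vnorm d (\<lambda>i. y i - z i)"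
      using flip by simp
    then show "\<exists>r>0. \<exists>L. \<forall>y\<in>space (Rsp d). \<forall>z\<in>space (Rsp d).
        vnorm d (\<lambda>i. y i - x i) < r \<and> vnorm d (\<lambda>i. z i - x i) < r \<longrightarrow>
        \<bar>f y - f z\<bar> \<le> L * vnorm d (\<lambda>i. y i - z i)" by (intro exI[of _ 1] conjI exI[of _ "1/h"]) auto
  qed
  have fmR[measurable]: "f \<in> borel_measurable (Rsp d)" unfolding f_def[abs_def] by measurable
  have fm[measurable]: "f \<in> borel_measurable \<mu>" by (rule meas_cong[OF fmR])
  have intf: "integrable \<mu> f"
    by (rule integrable_const_bound[where B=1]) (use f01 in \<open>auto\<close>)
  have intf2: "integrable \<mu> (\<lambda>x. (f x)\<^sup>2)"
    by (rule integrable_const_bound[where B=1]) (use f01 in \<open>auto simp: abs_le_square_iff power_le_one\<close>)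
  define m where "m = (\<integral>x. f x \<partial>\<mu>)"
  have m01: "0 \<le> m \<and> m \<le> 1"
  proof -
    have "0 \<le> m" unfolding m_def by (rule integral_nonneg_AE) (use f01 in auto)
    moreover have "m \<le> (\<integral>x. 1 \<partial>\<mu>)" unfolding m_def
      by (rule integral_mono) (use f01 intf in auto)
    ultimately show ?thesis by (simp add: prob_space)
  qed
  have sq1: "(f x - m)\<^sup>2 \<le> 1" for x
  proof -
    have "\<bar>f x - m\<bar> \<le> 1" using f01[of x] m01 by linarith
    then have "\<bar>f x - m\<bar>\<^sup>2 \<le> 1\<^sup>2" by (intro power_mono) auto
    then show ?thesis by simp
  qed
  have intv: "integrable \<mu> (\<lambda>x. (f x - m)\<^sup>2)"
    by (rule integrable_const_bound[where B=1]) (use sq1 in auto)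
  define A where "A = {x\<in>space \<mu>. \<phi> x \<le> t}"
  define B where "B = {x\<in>space \<mu>. \<phi> x \<ge> t + h}"
  define D where "D = {x\<in>space \<mu>. \<phi> x \<ge> t}"
  have phim[measurable]: "\<phi> \<in> borel_measurable \<mu>" by (rule meas_cong[OF phi_meas])
  have [measurable]: "A \<in> sets \<mu>" "B \<in> sets \<mu>" "D \<in> sets \<mu>" unfolding A_def B_def D_def by measurable
  have fA: "x \<in> A \<Longrightarrow> f x = 0" for x using h by (auto simp: A_def f_def divide_nonpos_pos)
  have fB: "x \<in> B \<Longrightarrow> f x = 1" for x using h by (auto simp: B_def f_def le_divide_eq)
  have AB: "A \<inter> B = {}" using h by (auto simp: A_def B_def)
  have pw: "indicator A x * m\<^sup>2 + indicator B x * (1 - m)\<^sup>2 \<le> (f x - m)\<^sup>2" for x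
    using fA[of x] fB[of x] AB by (auto simp: indicator_def)
  have "(\<integral>x. indicator A x * m\<^sup>2 + indicator B x * (1 - m)\<^sup>2 \<partial>\<mu>) \<le> (\<integral>x. (f x - m)\<^sup>2 \<partial>\<mu>)"
    by (rule integral_mono[OF _ intv pw])
       (intro Bochner_Integration.integrable_add Bochner_Integration.integrable_mult_left integrable_real_indicator; simp add: less_top[symmetric])
  moreover have "(\<integral>x. indicator A x * m\<^sup>2 + indicator B x * (1 - m)\<^sup>2 \<partial>\<mu>) = prob A * m\<^sup>2 + prob B * (1 - m)\<^sup>2"
    by (subst Bochner_Integration.integral_add)
       (auto intro!: Bochner_Integration.integrable_mult_left integrable_real_indicator
             simp: less_top[symmetric] \<open>A \<in> sets \<mu>\<close> \<open>B \<in> sets \<mu>\<close> sets.Int_space_eq2)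
  ultimately have varlow: "prob A * m\<^sup>2 + prob B * (1 - m)\<^sup>2 \<le> (\<integral>x. (f x - m)\<^sup>2 \<partial>\<mu>)" by simp
  have sumAB: "prob A + prob B \<le> 1"
    using finite_measure_Union[of A B] AB prob_le_1[of "A \<union> B"] by simp
  have quad: "prob A * prob B \<le> prob A * m\<^sup>2 + prob B * (1 - m)\<^sup>2"
  proof (cases "prob A + prob B > 0")
    case True
    have a0: "0 \<le> prob A" "0 \<le> prob B" by auto
    have "(prob A + prob B) * (prob A * m\<^sup>2 + prob B * (1 - m)\<^sup>2) - prob A * prob B
          = ((prob A + prob B) * m - prob B)\<^sup>2"
      by (simp add: power2_eq_square algebra_simps)
    then have e: "prob A * prob B \<le> (prob A + prob B) * (prob A * m\<^sup>2 + prob B * (1 - m)\<^sup>2)"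
      by (smt (verit) zero_le_power2)
    have "prob A * prob B * (prob A + prob B) \<le> prob A * prob B"
      using sumAB a0 by (simp add: mult_left_le)
    also have "\<dots> \<le> (prob A + prob B) * (prob A * m\<^sup>2 + prob B * (1 - m)\<^sup>2)" by (rule e)
    finally show ?thesis using True by (simp add: mult.commute)
  next
    case False
    then have "prob A = 0" "prob B = 0" using measure_nonneg[of \<mu> A] measure_nonneg[of \<mu> B] by linarith+
    then show ?thesis by simp
  qed
  have grad: "ennreal ((grad_norm d f x)\<^sup>2) \<le> ennreal (1 / h\<^sup>2) * indicator D x"
    if x: "x \<in> space \<mu>" for x
  proof -
    have xs: "x \<in> space (Rsp d)" using x space_eq by simp
    have evs: "eventually (\<lambda>y. y \<in> space (Rsp d)) (at x within space (Rsp d))"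
      by (simp add: eventually_at_filter)
    have qb: "\<bar>f y - f x\<bar> / vnorm d (\<lambda>i. y i - x i) \<le> 1 / h" if "y \<in> space (Rsp d)" for y
    proof (cases "vnorm d (\<lambda>i. y i - x i) = 0")
      case False
      then have "vnorm d (\<lambda>i. y i - x i) > 0" using vnorm_nonneg[of d "\<lambda>i. y i - x i"] by linarith
      then show ?thesis using flip[OF that xs] by (simp add: divide_le_eq field_simps)
    qed (use h in simp)
    have g1: "0 \<le> grad_norm d f x \<and> grad_norm d f x \<le> 1 / h"
      unfolding grad_norm_def
      by (rule limsup_real_bound') (use qb h vnorm_nonneg in \<open>auto intro: eventually_mono[OF evs]\<close>)
    show ?thesis
    proof (cases "x \<in> D")
      case True
      have "(grad_norm d f x)\<^sup>2 \<le> (1/h)\<^sup>2" using g1 by (intro power_mono) auto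
      then show ?thesis using True by (simp add: power_divide)
    next
      case False
      then have lt: "\<phi> x < t" using x by (auto simp: D_def)
      have ev2: "eventually (\<lambda>y. vnorm d (\<lambda>i. y i - x i) < t - \<phi> x) (at x within space (Rsp d))"
        using lt by (intro vnorm_eventually) simp
      have fx0: "f x = 0" using lt h by (simp add: f_def divide_nonpos_pos)
      have "eventually (\<lambda>y. \<bar>f y - f x\<bar> / vnorm d (\<lambda>i. y i - x i) \<le> 0) (at x within space (Rsp d))"
        using ev2 evs
      proof eventually_elim
        case (elim y)
        then have "\<phi> y < t" using lip[OF _ xs, of y] by linarith
        then have "f y = 0" using h by (simp add: f_def divide_nonpos_pos)
        then show ?case using fx0 by simp
      qed
      then have "0 \<le> grad_norm d f x \<and> grad_norm d f x \<le> 0"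
        unfolding grad_norm_def by (rule limsup_real_bound'[rotated]) (auto simp: vnorm_nonneg)
      then show ?thesis using False by simp
    qed
  qed
  have G: "(\<integral>\<^sup>+x. ennreal ((grad_norm d f x)\<^sup>2) \<partial>\<mu>) \<le> ennreal (1 / h\<^sup>2 * prob D)"
  proof -
    have "(\<integral>\<^sup>+x. ennreal ((grad_norm d f x)\<^sup>2) \<partial>\<mu>) \<le> (\<integral>\<^sup>+x. ennreal (1 / h\<^sup>2) * indicator D x \<partial>\<mu>)"
      by (rule nn_integral_mono) (rule grad)
    also have "\<dots> = ennreal (1 / h\<^sup>2) * emeasure \<mu> D" by (simp add: nn_integral_cmult_indicator)
    also have "\<dots> = ennreal (1 / h\<^sup>2 * prob D)" by (simp add: emeasure_eq_measure ennreal_mult[symmetric])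
    finally show ?thesis .
  qed
  have "ennreal (\<integral>x. (f x - m)\<^sup>2 \<partial>\<mu>) \<le> ennreal C * (SUP \<theta>\<in>vsphere d. \<integral>\<^sup>+x. ennreal ((vinner d x \<theta>)\<^sup>2) \<partial>\<mu>)
                 * (\<integral>\<^sup>+x. ennreal ((grad_norm d f x)\<^sup>2) \<partial>\<mu>)"
    using kls_ineq[OF ll intf2] by (simp add: m_def)
  also have "\<dots> \<le> ennreal C * 1 * ennreal (1 / h\<^sup>2 * prob D)"
    by (intro mult_mono S_le1 G) auto
  also have "\<dots> = ennreal (C / h\<^sup>2 * prob D)" using Cpos by (simp add: ennreal_mult[symmetric])
  finally have "(\<integral>x. (f x - m)\<^sup>2 \<partial>\<mu>) \<le> C / h\<^sup>2 * prob D"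
    using Cpos by (subst (asm) ennreal_le_iff) auto
  then show ?thesis using varlow quad unfolding A_def B_def D_def by linarith
qed


lemma iter:
  fixes \<phi> :: "(nat \<Rightarrow> real) \<Rightarrow> real" and h t0 :: real
  assumes phi_meas[measurable]: "\<phi> \<in> borel_measurable (Rsp d)"
    and lip: "\<And>y z. y \<in> space (Rsp d) \<Longrightarrow> z \<in> space (Rsp d) \<Longrightarrow> \<bar>\<phi> y - \<phi> z\<bar> \<le> vnorm d (\<lambda>i. y i - z i)"
    and h: "h > 0" "h\<^sup>2 = 4 * C"
    and t0: "prob {x\<in>space \<mu>. \<phi> x \<le> t0} \<ge> 1/2"
  shows "prob {x\<in>space \<mu>. \<phi> x \<ge> t0 + real j * h} \<le> (1/2)^j"
proof (induction j)
  case 0 then show ?case by simp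
next
  case (Suc j)
  define t where "t = t0 + real j * h"
  have phim[measurable]: "\<phi> \<in> borel_measurable \<mu>" by (rule meas_cong[OF phi_meas])
  have "prob {x\<in>space \<mu>. \<phi> x \<le> t0} \<le> prob {x\<in>space \<mu>. \<phi> x \<le> t}"
  proof (intro finite_measure_mono)
    have "0 \<le> real j * h" using h by simp
    then show "{x \<in> space \<mu>. \<phi> x \<le> t0} \<subseteq> {x \<in> space \<mu>. \<phi> x \<le> t}" by (auto simp: t_def)
  qed measurable
  then have half: "prob {x\<in>space \<mu>. \<phi> x \<le> t} \<ge> 1/2" using t0 by linarith
  have st: "prob {x\<in>space \<mu>. \<phi> x \<le> t} * prob {x\<in>space \<mu>. \<phi> x \<ge> t + h}
          \<le> C / h\<^sup>2 * prob {x\<in>space \<mu>. \<phi> x \<ge> t}"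
    by (rule step[OF phi_meas lip h(1)])
  have c4: "C / h\<^sup>2 = 1/4" using h Cpos by simp
  have "1/2 * prob {x\<in>space \<mu>. \<phi> x \<ge> t + h} \<le> prob {x\<in>space \<mu>. \<phi> x \<le> t} * prob {x\<in>space \<mu>. \<phi> x \<ge> t + h}"
    using half by (intro mult_right_mono) auto
  then have "prob {x\<in>space \<mu>. \<phi> x \<ge> t + h} \<le> 1/2 * prob {x\<in>space \<mu>. \<phi> x \<ge> t}"
    using st unfolding c4 by linarith
  also have "\<dots> \<le> 1/2 * (1/2)^j" using Suc.IH by (simp add: t_def)
  finally show ?case by (simp add: t_def algebra_simps)
qed

definition g :: "(nat \<Rightarrow> real) \<Rightarrow> real" where "g = vnorm d"

lemma g_meas[measurable]: "g \<in> borel_measurable \<mu>"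
  unfolding g_def by (rule meas_cong[OF vnorm_meas])

lemma g_sq: "(g x)\<^sup>2 = (\<Sum>i<d. x i * x i)"
  unfolding g_def vnorm_def by (simp add: sum_nonneg power2_eq_square)

lemma g_sq_int: "integrable \<mu> (\<lambda>x. (g x)\<^sup>2)"
  unfolding g_sq by (intro Bochner_Integration.integrable_sum int_ij) auto

lemma g_sq_E: "(\<integral>x. (g x)\<^sup>2 \<partial>\<mu>) = real d"
  unfolding g_sq by (subst Bochner_Integration.integral_sum) (auto intro: int_ij simp: E_ij)

lemma g_int: "integrable \<mu> g"
  using square_integrable_imp_integrable[OF g_meas g_sq_int] .

lemma g_var: "variance g \<le> C"
proof -
  have ll: "locally_lipschitz d g"
    unfolding locally_lipschitz_def
  proof (intro ballI)
    fix x assume "x \<in> space (Rsp d)"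
    have "\<forall>y\<in>space (Rsp d). \<forall>z\<in>space (Rsp d). \<bar>g y - g z\<bar> \<le> 1 * vnorm d (\<lambda>i. y i - z i)"
      using vnorm_lip by (simp add: g_def)
    then show "\<exists>r>0. \<exists>L. \<forall>y\<in>space (Rsp d). \<forall>z\<in>space (Rsp d).
        vnorm d (\<lambda>i. y i - x i) < r \<and> vnorm d (\<lambda>i. z i - x i) < r \<longrightarrow>
        \<bar>g y - g z\<bar> \<le> L * vnorm d (\<lambda>i. y i - z i)" by (intro exI[of _ 1] conjI exI[of _ "1"]) auto
  qed
  have grad: "ennreal ((grad_norm d g x)\<^sup>2) \<le> 1" for x
  proof -
    have evs: "eventually (\<lambda>y. y \<in> space (Rsp d)) (at x within space (Rsp d))"
      by (simp add: eventually_at_filter)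
    have qb: "\<bar>g y - g x\<bar> / vnorm d (\<lambda>i. y i - x i) \<le> 1" for y
    proof (cases "vnorm d (\<lambda>i. y i - x i) = 0")
      case False
      then have "vnorm d (\<lambda>i. y i - x i) > 0" using vnorm_nonneg[of d "\<lambda>i. y i - x i"] by linarith
      then show ?thesis using vnorm_lip[of d y x] by (simp add: g_def divide_le_eq)
    qed simp
    have g1: "0 \<le> grad_norm d g x \<and> grad_norm d g x \<le> 1"
      unfolding grad_norm_def
      by (rule limsup_real_bound') (use qb vnorm_nonneg in auto)
    then have "(grad_norm d g x)\<^sup>2 \<le> 1" by (simp add: abs_square_le_1)
    then show ?thesis by simp
  qed
  have G: "(\<integral>\<^sup>+x. ennreal ((grad_norm d g x)\<^sup>2) \<partial>\<mu>) \<le> 1"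
  proof -
    have "(\<integral>\<^sup>+x. ennreal ((grad_norm d g x)\<^sup>2) \<partial>\<mu>) \<le> (\<integral>\<^sup>+x. 1 \<partial>\<mu>)"
      by (rule nn_integral_mono) (rule grad)
    then show ?thesis by (simp add: emeasure_space_1)
  qed
  have "ennreal (variance g) \<le> ennreal C * (SUP \<theta>\<in>vsphere d. \<integral>\<^sup>+x. ennreal ((vinner d x \<theta>)\<^sup>2) \<partial>\<mu>)
                 * (\<integral>\<^sup>+x. ennreal ((grad_norm d g x)\<^sup>2) \<partial>\<mu>)"
    using kls_ineq[OF ll g_sq_int] by simp
  also have "\<dots> \<le> ennreal C * 1 * 1"
    by (intro mult_mono S_le1 G) auto
  finally show ?thesis using Cpos by (simp add: ennreal_le_iff)
qed


definition hh :: real where "hh = 2 * sqrt C"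

lemma hh_pos: "hh > 0" and hh_sq: "hh\<^sup>2 = 4 * C"
  using Cpos by (auto simp: hh_def power_mult_distrib)

lemma E_bounds: "sqrt d - hh \<le> expectation g \<and> expectation g \<le> sqrt d"
proof -
  define E where "E = expectation g"
  have ve: "variance g = real d - E\<^sup>2"
    using variance_eq[OF g_int g_sq_int] g_sq_E by (simp add: E_def)
  have E0: "0 \<le> E" unfolding E_def g_def by (rule integral_nonneg_AE) (simp add: vnorm_nonneg)
  have "E\<^sup>2 \<le> real d" using ve variance_positive[of g] by linarith
  then have up: "E \<le> sqrt d" using E0 real_le_rsqrt by blast
  have low2: "real d - C \<le> E\<^sup>2" using ve g_var by linarith
  have "sqrt d - E \<le> hh"
  proof (cases "sqrt d + E \<ge> sqrt C")
    case True
    have "(sqrt d - E) * (sqrt d + E) = real d - E\<^sup>2" by (simp add: algebra_simps power2_eq_square)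
    also have "\<dots> \<le> C" using low2 by simp
    also have "\<dots> = sqrt C * sqrt C" using Cpos by simp
    also have "\<dots> \<le> sqrt C * (sqrt d + E)" using True Cpos by (intro mult_left_mono) auto
    finally have m: "(sqrt d - E) * (sqrt d + E) \<le> sqrt C * (sqrt d + E)" .
    have "0 < sqrt d + E" using True Cpos by (smt (verit) real_sqrt_gt_zero)
    then have "sqrt d - E \<le> sqrt C" using m by (rule mult_right_le_imp_le[rotated])
    moreover have "0 \<le> sqrt C" using Cpos by simp
    ultimately show ?thesis unfolding hh_def by linarith
  next
    case False
    moreover have "0 \<le> sqrt C" "0 \<le> sqrt d" using Cpos by auto
    ultimately show ?thesis using E0 unfolding hh_def by linarith
  qed
  then show ?thesis using up by (simp add: E_def)
qed

lemma cheb: "prob {x\<in>space \<mu>. \<bar>g x - expectation g\<bar> \<ge> hh} \<le> 1/4"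
proof -
  have "prob {x\<in>space \<mu>. \<bar>g x - expectation g\<bar> \<ge> hh} \<le> variance g / hh\<^sup>2"
    by (rule Chebyshev_inequality[OF g_meas g_sq_int hh_pos])
  also have "\<dots> \<le> C / hh\<^sup>2" using g_var hh_pos by (simp add: divide_right_mono)
  also have "\<dots> = 1/4" using hh_sq Cpos by simp
  finally show ?thesis .
qed

lemma med_up: "prob {x\<in>space \<mu>. g x \<le> expectation g + hh} \<ge> 1/2"
proof -
  have "prob (space \<mu> - {x\<in>space \<mu>. g x \<le> expectation g + hh}) \<le> prob {x\<in>space \<mu>. \<bar>g x - expectation g\<bar> \<ge> hh}"
    by (intro finite_measure_mono) auto
  then show ?thesis using cheb prob_compl[of "{x\<in>space \<mu>. g x \<le> expectation g + hh}"] by simp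
qed

lemma med_low: "prob {x\<in>space \<mu>. - g x \<le> - expectation g + hh} \<ge> 1/2"
proof -
  have "prob (space \<mu> - {x\<in>space \<mu>. - g x \<le> - expectation g + hh}) \<le> prob {x\<in>space \<mu>. \<bar>g x - expectation g\<bar> \<ge> hh}"
    by (intro finite_measure_mono) auto
  then show ?thesis using cheb prob_compl[of "{x\<in>space \<mu>. - g x \<le> - expectation g + hh}"] by simp
qed

lemma tailU_nat: "prob {x\<in>space \<mu>. g x \<ge> sqrt d + (real j + 1) * hh} \<le> (1/2)^j"
proof -
  have "prob {x\<in>space \<mu>. g x \<ge> sqrt d + (real j + 1) * hh}
      \<le> prob {x\<in>space \<mu>. g x \<ge> (expectation g + hh) + real j * hh}"
    using E_bounds by (intro finite_measure_mono) (auto simp: algebra_simps)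
  also have "\<dots> \<le> (1/2)^j"
    by (rule iter[OF vnorm_meas _ hh_pos hh_sq med_up[unfolded g_def], folded g_def])
       (simp add: g_def vnorm_lip)
  finally show ?thesis .
qed


lemma tailL_nat: "prob {x\<in>space \<mu>. g x \<le> sqrt d - (real j + 2) * hh} \<le> (1/2)^j"
proof -
  have "prob {x\<in>space \<mu>. g x \<le> sqrt d - (real j + 2) * hh}
      \<le> prob {x\<in>space \<mu>. - vnorm d x \<ge> (- expectation g + hh) + real j * hh}"
  proof (rule finite_measure_mono)
    show "{x\<in>space \<mu>. g x \<le> sqrt d - (real j + 2) * hh}
        \<subseteq> {x\<in>space \<mu>. - vnorm d x \<ge> (- expectation g + hh) + real j * hh}"
      using E_bounds by (auto simp: algebra_simps g_def)
    have [measurable]: "vnorm d \<in> borel_measurable \<mu>" by (rule meas_cong[OF vnorm_meas])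
    show "{x\<in>space \<mu>. - vnorm d x \<ge> (- expectation g + hh) + real j * hh} \<in> events" by measurable
  qed
  also have "\<dots> \<le> (1/2)^j"
  proof (rule iter[OF _ _ hh_pos hh_sq])
    show "(\<lambda>x. - vnorm d x) \<in> borel_measurable (Rsp d)" by measurable
    show "\<bar>- vnorm d y - - vnorm d z\<bar> \<le> vnorm d (\<lambda>i. y i - z i)" for y z
      using vnorm_lip[of d y z] by simp
    show "1/2 \<le> prob {x \<in> space \<mu>. - vnorm d x \<le> - expectation g + hh}"
      using med_low by (simp add: g_def)
  qed
  finally show ?thesis .
qed

end

lemma real_tail:
  fixes P hh u :: real
  assumes tl: "\<And>j::nat. (real j + 2) * hh \<le> u \<Longrightarrow> P \<le> (1/2)^j"
    and P1: "P \<le> 1" and hh: "hh > 0" and u: "u \<ge> 0"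
  shows "P \<le> 8 * exp (- (ln 2 / hh) * u)"
proof -
  define n where "n = nat \<lfloor>u / hh\<rfloor>"
  have q0: "0 \<le> u / hh" using u hh by simp
  have nle: "real n \<le> u / hh" using q0 unfolding n_def by linarith
  have ngt: "u / hh < real n + 1" using q0 unfolding n_def by linarith
  have e: "(1/2::real)^m = exp (- ln 2 * real m)" for m
  proof -
    have "exp (- ln 2 * real m) = exp (- ln 2) ^ m" by (subst exp_of_nat_mult[symmetric]) (simp add: mult.commute)
    also have "exp (- ln 2) = (1/2::real)" by (simp add: exp_minus)
    finally show ?thesis by simp
  qed
  show ?thesis
  proof (cases "n \<ge> 2")
    case True
    define j where "j = n - 2"
    have jn: "real j + 2 = real n" using True by (simp add: j_def)
    have "(real j + 2) * hh \<le> u" using nle hh by (simp add: jn le_divide_eq)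
    then have "P \<le> (1/2)^j" by (rule tl)
    also have "(1/2::real)^j = 4 * (1/2)^n"
    proof -
      have "n = j + 2" using True by (simp add: j_def)
      then show ?thesis by (simp add: power_add)
    qed
    also have "(1/2::real)^n = exp (- ln 2 * real n)" by (rule e)
    also have "\<dots> \<le> exp (- ln 2 * (u / hh - 1))"
      using ngt by (intro exp_le_cancel_iff[THEN iffD2]) (simp add: mult_le_cancel_left)
    also have "\<dots> = 2 * exp (- (ln 2 / hh) * u)"
    proof -
      have "- ln 2 * (u / hh - 1) = ln 2 + (- (ln 2 / hh) * u)" by (simp add: algebra_simps)
      then have "exp (- ln 2 * (u / hh - 1)) = exp (ln 2) * exp (- (ln 2 / hh) * u)"
        by (metis exp_add)
      then show ?thesis by simp
    qed
    finally show ?thesis by simp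
  next
    case False
    then have "u / hh < 2" using nle ngt by linarith
    then have "(u / hh) * ln 2 \<le> 2 * ln 2" by (intro mult_right_mono) auto
    then have "- (ln 2 / hh) * u \<ge> - ln 2 * 2" by (simp add: algebra_simps)
    then have a: "exp (- (ln 2 / hh) * u) \<ge> exp (- ln 2 * 2)" by (simp only: exp_le_cancel_iff)
    have "exp (- ln 2 * 2) = (1/2::real)^2" using e[of 2] by simp
    then have "exp (- ln 2 * 2) = (1/4::real)" by (simp add: power2_eq_square)
    then have "exp (- (ln 2 / hh) * u) \<ge> 1/4" using a by linarith
    then show ?thesis using P1 by linarith
  qed
qed

context kls begin

lemma tailU: "u \<ge> 0 \<Longrightarrow> prob {x\<in>space \<mu>. g x \<ge> sqrt d + u} \<le> 8 * exp (- (ln 2 / hh) * u)"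
proof (rule real_tail[OF _ _ hh_pos])
  fix j :: nat assume j: "(real j + 2) * hh \<le> u"
  have "prob {x\<in>space \<mu>. g x \<ge> sqrt d + u} \<le> prob {x\<in>space \<mu>. g x \<ge> sqrt d + (real j + 1) * hh}"
    using j hh_pos by (intro finite_measure_mono) (auto simp: algebra_simps)
  also have "\<dots> \<le> (1/2)^j" by (rule tailU_nat)
  finally show "prob {x\<in>space \<mu>. g x \<ge> sqrt d + u} \<le> (1/2)^j" .
qed auto

lemma tailL: "u \<ge> 0 \<Longrightarrow> prob {x\<in>space \<mu>. g x \<le> sqrt d - u} \<le> 8 * exp (- (ln 2 / hh) * u)"
proof (rule real_tail[OF _ _ hh_pos])
  fix j :: nat assume j: "(real j + 2) * hh \<le> u"
  have "prob {x\<in>space \<mu>. g x \<le> sqrt d - u} \<le> prob {x\<in>space \<mu>. g x \<le> sqrt d - (real j + 2) * hh}"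
    using j by (intro finite_measure_mono) (auto simp: algebra_simps)
  also have "\<dots> \<le> (1/2)^j" by (rule tailL_nat)
  finally show "prob {x\<in>space \<mu>. g x \<le> sqrt d - u} \<le> (1/2)^j" .
qed auto

lemma tailU': "u \<ge> 0 \<Longrightarrow> measure \<mu> {x\<in>space \<mu>. vnorm d x \<ge> sqrt d + u} \<le> 8 * exp (- (ln 2 / (2 * sqrt C)) * u)"
  using tailU by (simp add: g_def hh_def)

lemma tailL': "u \<ge> 0 \<Longrightarrow> measure \<mu> {x\<in>space \<mu>. vnorm d x \<le> sqrt d - u} \<le> 8 * exp (- (ln 2 / (2 * sqrt C)) * u)"
  using tailL by (simp add: g_def hh_def)

end

lemma omega_tails:
  assumes M: "prob_space M" and xi[measurable]: "\<xi> \<in> measurable M (Rsp d)"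
    and K: "kls (distr M (Rsp d) \<xi>) d C" and d: "d \<ge> 1" and a: "a \<ge> 0"
  shows "measure M {\<omega>\<in>space M. vnorm d (\<xi> \<omega>) / sqrt d \<ge> 1 + a} \<le> 8 * exp (- (ln 2 / (2 * sqrt C)) * (a * sqrt d))"
    and "measure M {\<omega>\<in>space M. vnorm d (\<xi> \<omega>) / sqrt d \<le> 1 - a} \<le> 8 * exp (- (ln 2 / (2 * sqrt C)) * (a * sqrt d))"
proof -
  have sd: "sqrt d > 0" using d by simp
  have ua: "a * sqrt d \<ge> 0" using a sd by simp
  have sp: "space (distr M (Rsp d) \<xi>) = space (Rsp d)" by simp
  have U: "measure (distr M (Rsp d) \<xi>) {x\<in>space (Rsp d). vnorm d x \<ge> sqrt d + a * sqrt d} \<le> 8 * exp (- (ln 2 / (2 * sqrt C)) * (a * sqrt d))"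
    using kls.tailU'[OF K ua] by (simp only: sp)
  have L: "measure (distr M (Rsp d) \<xi>) {x\<in>space (Rsp d). vnorm d x \<le> sqrt d - a * sqrt d} \<le> 8 * exp (- (ln 2 / (2 * sqrt C)) * (a * sqrt d))"
    using kls.tailL'[OF K ua] by (simp only: sp)
  have m1: "measure (distr M (Rsp d) \<xi>) {x\<in>space (Rsp d). vnorm d x \<ge> sqrt d + a * sqrt d}
      = measure M {\<omega>\<in>space M. vnorm d (\<xi> \<omega>) / sqrt d \<ge> 1 + a}"
  proof -
    have "measure (distr M (Rsp d) \<xi>) {x\<in>space (Rsp d). vnorm d x \<ge> sqrt d + a * sqrt d}
        = measure M (\<xi> -` {x\<in>space (Rsp d). vnorm d x \<ge> sqrt d + a * sqrt d} \<inter> space M)"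
      by (rule measure_distr) measurable
    also have "\<xi> -` {x\<in>space (Rsp d). vnorm d x \<ge> sqrt d + a * sqrt d} \<inter> space M
        = {\<omega>\<in>space M. vnorm d (\<xi> \<omega>) / sqrt d \<ge> 1 + a}"
      using measurable_space[OF xi] sd by (auto simp: le_divide_eq algebra_simps)
    finally show ?thesis .
  qed
  have m2: "measure (distr M (Rsp d) \<xi>) {x\<in>space (Rsp d). vnorm d x \<le> sqrt d - a * sqrt d}
      = measure M {\<omega>\<in>space M. vnorm d (\<xi> \<omega>) / sqrt d \<le> 1 - a}"
  proof -
    have "measure (distr M (Rsp d) \<xi>) {x\<in>space (Rsp d). vnorm d x \<le> sqrt d - a * sqrt d}
        = measure M (\<xi> -` {x\<in>space (Rsp d). vnorm d x \<le> sqrt d - a * sqrt d} \<inter> space M)"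
      by (rule measure_distr) measurable
    also have "\<xi> -` {x\<in>space (Rsp d). vnorm d x \<le> sqrt d - a * sqrt d} \<inter> space M
        = {\<omega>\<in>space M. vnorm d (\<xi> \<omega>) / sqrt d \<le> 1 - a}"
    proof -
      have eqv: "v / sqrt d \<le> 1 - a \<longleftrightarrow> v \<le> sqrt d - a * sqrt d" for v
        using sd by (simp add: pos_divide_le_eq left_diff_distrib)
      show ?thesis using measurable_space[OF xi] by (auto simp: eqv)
    qed
    finally show ?thesis .
  qed
  show "measure M {\<omega>\<in>space M. vnorm d (\<xi> \<omega>) / sqrt d \<ge> 1 + a} \<le> 8 * exp (- (ln 2 / (2 * sqrt C)) * (a * sqrt d))"
    using U m1 by simp
  show "measure M {\<omega>\<in>space M. vnorm d (\<xi> \<omega>) / sqrt d \<le> 1 - a} \<le> 8 * exp (- (ln 2 / (2 * sqrt C)) * (a * sqrt d))"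
    using L m2 by simp
qed



lemma Lbound:
  fixes s P b :: real
  assumes "s > 0" "P \<ge> 0" "P \<le> 8 * exp (- b)"
  shows "ereal (1 / s) * elog P \<le> ereal ((ln 8 - b) / s)"
proof (cases "P = 0")
  case True then show ?thesis using assms by (simp add: elog_def)
next
  case False
  then have Pp: "P > 0" using assms by simp
  have "ln P \<le> ln (8 * exp (- b))" using Pp assms by simp
  also have "\<dots> = ln 8 - b" by (simp add: ln_mult)
  finally have "ln P / s \<le> (ln 8 - b) / s" using assms by (simp add: divide_right_mono)
  then show ?thesis using False by (simp add: elog_def)
qed

lemma to_inf:
  fixes z :: ereal
  assumes "\<And>M. M > 0 \<Longrightarrow> - z \<le> ereal (- M)" "0 \<le> z"
  shows "z = \<infinity>"
proof (cases z)
  case (real r)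
  have "- z \<le> ereal (- (\<bar>r\<bar> + 1))" by (rule assms(1)) simp
  then show ?thesis using real by simp
qed (use assms in auto)

lemma arith1:
  fixes s sk c M :: real
  assumes "s > 0" "sk > 0" "c > 0" "M > 0" "s \<ge> ln 8" "s / sk < c / (M + 1)"
  shows "(ln 8 - c * sk) / s \<le> - M"
proof -
  have "ln 8 / s \<le> 1" using assms by simp
  have "s * (M + 1) < c * sk" using assms by (simp add: divide_less_eq field_simps)
  then have "M + 1 < c * sk / s" using assms by (simp add: less_divide_eq mult.commute)
  moreover have "(ln 8 - c * sk) / s = ln 8 / s - c * sk / s" by (simp add: diff_divide_distrib)
  ultimately show ?thesis using \<open>ln 8 / s \<le> 1\<close> by linarith
qed

lemma arith2:
  fixes s sk c Cc :: real
  assumes "s > 0" "sk > 0" "c \<ge> 0" "Cc > 0" "s \<le> Cc * sk"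
  shows "(ln 8 - c * sk) / s \<le> ln 8 / s - c / Cc"
proof -
  have "c * s \<le> c * (Cc * sk)" using assms by (intro mult_left_mono) auto
  then have "c / Cc \<le> c * sk / s"
    using assms by (simp add: divide_le_eq field_simps)
  moreover have "(ln 8 - c * sk) / s = ln 8 / s - c * sk / s" by (simp add: diff_divide_distrib)
  ultimately show ?thesis by linarith
qed

lemma ereal_div_ge:
  fixes z :: ereal and r t :: real
  assumes "z \<ge> ereal r" "t > 0"
  shows "z / ereal t \<ge> ereal (r / t)"
  using assms by (cases z) (auto simp: divide_right_mono)



theorem mainTheorem2:
  fixes k :: "nat \<Rightarrow> nat"
    and \<Omega> :: "nat \<Rightarrow> 'a measure"
    and \<xi> :: "nat \<Rightarrow> 'a \<Rightarrow> (nat \<Rightarrow> real)"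
    and s :: "nat \<Rightarrow> real"
    and I :: "real \<Rightarrow> ereal"
  assumes KLS: "KLS_conjecture"
    and k_range: "\<forall>n\<ge>1. 1 \<le> k n \<and> k n \<le> n"
    and k_lim: "filterlim k at_top sequentially"
    and prob: "\<forall>n\<ge>1. prob_space (\<Omega> n)"
    and meas: "\<forall>n\<ge>1. \<xi> n \<in> measurable (\<Omega> n) (Rsp (k n))"
    and iso: "\<forall>n\<ge>1. isotropic (k n) (distr (\<Omega> n) (Rsp (k n)) (\<xi> n))"
    and lc: "\<forall>n\<ge>1. log_concave_measure (k n) (distr (\<Omega> n) (Rsp (k n)) (\<xi> n))"
    and ldp: "LDP \<Omega> (\<lambda>n \<omega>. vnorm (k n) (\<xi> n \<omega>) / sqrt (real (k n))) s I"
  shows "\<not> (((\<lambda>n. s n / sqrt (real (k n))) \<longlonglongrightarrow> 0) \<and>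
              I \<noteq> (\<lambda>x. if x = 1 then 0 else \<infinity>))
       \<and> \<not> ((\<exists>c C. 0 < c \<and> c \<le> C \<and>
                 (\<forall>n\<ge>1. c * sqrt (real (k n)) \<le> s n \<and> s n \<le> C * sqrt (real (k n)))) \<and>
            (\<exists>t0>1. (INF t\<in>{t0<..}. (INF x\<in>{t<..}. I x) / ereal t) = 0))"
proof -
  from KLS obtain C where Cpos: "0 < C" and KL: "\<And>d \<mu> f.
           log_concave_measure d \<mu> \<and> centered d \<mu> \<and> locally_lipschitz d f \<and>
           integrable \<mu> (\<lambda>x. (f x)\<^sup>2) \<Longrightarrow>
           ennreal (\<integral>x. (f x - (\<integral>y. f y \<partial>\<mu>))\<^sup>2 \<partial>\<mu>)
             \<le> ennreal C * (SUP \<theta>\<in>vsphere d. \<integral>\<^sup>+x. ennreal ((vinner d x \<theta>)\<^sup>2) \<partial>\<mu>)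
                 * (\<integral>\<^sup>+x. ennreal ((grad_norm d f x)\<^sup>2) \<partial>\<mu>)"
    unfolding KLS_conjecture_def by blast
  have K: "kls (distr (\<Omega> n) (Rsp (k n)) (\<xi> n)) (k n) C" if n: "n \<ge> 1" for n
  proof -
    interpret P: prob_space "\<Omega> n" using prob n by simp
    have ps: "prob_space (distr (\<Omega> n) (Rsp (k n)) (\<xi> n))"
      by (rule P.prob_space_distr) (use meas n in simp)
    show ?thesis
    proof (intro kls.intro kls_axioms.intro ps)
      show "sets (distr (\<Omega> n) (Rsp (k n)) (\<xi> n)) = sets (Rsp (k n))" by simp
      show "isotropic (k n) (distr (\<Omega> n) (Rsp (k n)) (\<xi> n))" using iso n by simp
      show "0 < C" by (rule Cpos)
      fix f assume "locally_lipschitz (k n) f" "integrable (distr (\<Omega> n) (Rsp (k n)) (\<xi> n)) (\<lambda>x. (f x)\<^sup>2)"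
      then show "ennreal (\<integral>x. (f x - (\<integral>y. f y \<partial>distr (\<Omega> n) (Rsp (k n)) (\<xi> n)))\<^sup>2 \<partial>distr (\<Omega> n) (Rsp (k n)) (\<xi> n))
             \<le> ennreal C * (SUP \<theta>\<in>vsphere (k n). \<integral>\<^sup>+x. ennreal ((vinner (k n) x \<theta>)\<^sup>2) \<partial>distr (\<Omega> n) (Rsp (k n)) (\<xi> n))
                 * (\<integral>\<^sup>+x. ennreal ((grad_norm (k n) f x)\<^sup>2) \<partial>distr (\<Omega> n) (Rsp (k n)) (\<xi> n))"
        using KL lc iso n unfolding isotropic_def by blast
    qed
  qed
  define c0 where "c0 = ln 2 / (2 * sqrt C)"
  have c0: "c0 > 0" using Cpos by (simp add: c0_def)
  define X where "X n \<omega> = vnorm (k n) (\<xi> n \<omega>) / sqrt (real (k n))" for n \<omega>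
  define L where "L A n = ereal (1 / s n) * elog (measure (\<Omega> n) {\<omega>\<in>space (\<Omega> n). X n \<omega> \<in> A})" for A n
  have ldp': "(\<forall>n\<ge>1. 0 < s n) \<and> filterlim s at_top sequentially \<and>
     (\<forall>x. 0 \<le> I x) \<and>
     (\<forall>A \<in> sets borel. - (INF x\<in>interior A. I x) \<le> liminf (L A) \<and> limsup (L A) \<le> - (INF x\<in>closure A. I x))"
    using ldp unfolding LDP_def L_def X_def by blast
  have spos: "\<And>n. n \<ge> 1 \<Longrightarrow> 0 < s n" and slim: "filterlim s at_top sequentially"
    and Inn: "\<And>x. 0 \<le> I x"
    and low: "\<And>A. A \<in> sets borel \<Longrightarrow> - (INF x\<in>interior A. I x) \<le> liminf (L A)"
    and up: "\<And>A. A \<in> sets borel \<Longrightarrow> limsup (L A) \<le> - (INF x\<in>closure A. I x)"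
    using ldp' by auto
  have kpos: "\<And>n. n \<ge> 1 \<Longrightarrow> sqrt (real (k n)) > 0" using k_range by auto
  have Xm: "\<And>n. n \<ge> 1 \<Longrightarrow> X n \<in> borel_measurable (\<Omega> n)"
  proof -
    fix n :: nat assume n: "n \<ge> 1"
    have "(\<lambda>\<omega>. vnorm (k n) (\<xi> n \<omega>)) \<in> borel_measurable (\<Omega> n)"
    proof -
      have "\<xi> n \<in> \<Omega> n \<rightarrow>\<^sub>M Rsp (k n)" using meas n by simp
      from measurable_comp[OF this vnorm_meas] show ?thesis by (simp add: comp_def)
    qed
    then show "X n \<in> borel_measurable (\<Omega> n)" unfolding X_def[abs_def] by measurable
  qed
  have LU: "L A n \<le> ereal ((ln 8 - c0 * a * sqrt (real (k n))) / s n)"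
    if n: "n \<ge> 1" and a: "a \<ge> 0" and A: "A \<subseteq> {y. y \<ge> 1 + a}" for A n a
  proof -
    interpret P: prob_space "\<Omega> n" using prob n by simp
    have "measure (\<Omega> n) {\<omega>\<in>space (\<Omega> n). X n \<omega> \<in> A} \<le> measure (\<Omega> n) {\<omega>\<in>space (\<Omega> n). X n \<omega> \<ge> 1 + a}"
    proof (rule P.finite_measure_mono)
      show "{\<omega>\<in>space (\<Omega> n). X n \<omega> \<in> A} \<subseteq> {\<omega>\<in>space (\<Omega> n). X n \<omega> \<ge> 1 + a}" using A by auto
      have [measurable]: "X n \<in> borel_measurable (\<Omega> n)" using Xm n .
      show "{\<omega>\<in>space (\<Omega> n). X n \<omega> \<ge> 1 + a} \<in> sets (\<Omega> n)" by measurable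
    qed
    also have "\<dots> \<le> 8 * exp (- (ln 2 / (2 * sqrt C)) * (a * sqrt (real (k n))))"
      unfolding X_def by (rule omega_tails(1)[OF _ _ K[OF n] _ a]) (use prob meas k_range n in auto)
    finally have "measure (\<Omega> n) {\<omega>\<in>space (\<Omega> n). X n \<omega> \<in> A} \<le> 8 * exp (- (c0 * a * sqrt (real (k n))))"
      by (simp add: c0_def mult.assoc)
    then show ?thesis unfolding L_def by (intro Lbound) (use spos n in auto)
  qed
  have LL: "L A n \<le> ereal ((ln 8 - c0 * a * sqrt (real (k n))) / s n)"
    if n: "n \<ge> 1" and a: "a \<ge> 0" and A: "A \<subseteq> {y. y \<le> 1 - a}" for A n a
  proof -
    interpret P: prob_space "\<Omega> n" using prob n by simp
    have "measure (\<Omega> n) {\<omega>\<in>space (\<Omega> n). X n \<omega> \<in> A} \<le> measure (\<Omega> n) {\<omega>\<in>space (\<Omega> n). X n \<omega> \<le> 1 - a}"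
    proof (rule P.finite_measure_mono)
      show "{\<omega>\<in>space (\<Omega> n). X n \<omega> \<in> A} \<subseteq> {\<omega>\<in>space (\<Omega> n). X n \<omega> \<le> 1 - a}" using A by auto
      have [measurable]: "X n \<in> borel_measurable (\<Omega> n)" using Xm n .
      show "{\<omega>\<in>space (\<Omega> n). X n \<omega> \<le> 1 - a} \<in> sets (\<Omega> n)" by measurable
    qed
    also have "\<dots> \<le> 8 * exp (- (ln 2 / (2 * sqrt C)) * (a * sqrt (real (k n))))"
      unfolding X_def by (rule omega_tails(2)[OF _ _ K[OF n] _ a]) (use prob meas k_range n in auto)
    finally have "measure (\<Omega> n) {\<omega>\<in>space (\<Omega> n). X n \<omega> \<in> A} \<le> 8 * exp (- (c0 * a * sqrt (real (k n))))"
      by (simp add: c0_def mult.assoc)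
    then show ?thesis unfolding L_def by (intro Lbound) (use spos n in auto)
  qed
  have evn1: "eventually (\<lambda>n. n \<ge> (1::nat)) sequentially" by (rule eventually_ge_at_top)
  have part_a: "\<not> (((\<lambda>n. s n / sqrt (real (k n))) \<longlonglongrightarrow> 0) \<and> I \<noteq> (\<lambda>x. if x = 1 then 0 else \<infinity>))"
  proof
    assume asm: "((\<lambda>n. s n / sqrt (real (k n))) \<longlonglongrightarrow> 0) \<and> I \<noteq> (\<lambda>x. if x = 1 then 0 else \<infinity>)"
    then have t0: "(\<lambda>n. s n / sqrt (real (k n))) \<longlonglongrightarrow> 0" by blast
    have evs8: "eventually (\<lambda>n. s n \<ge> ln 8) sequentially"
      using slim by (simp add: filterlim_at_top)
    have key: "liminf (L A) \<le> ereal (- M)"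
      if a: "a > 0" and M: "M > 0"
      and LB: "\<And>n. n \<ge> 1 \<Longrightarrow> L A n \<le> ereal ((ln 8 - c0 * a * sqrt (real (k n))) / s n)" for A a M
    proof (rule Liminf_le)
      have "c0 * a / (M + 1) > 0" using c0 a M by simp
      then have ev3: "eventually (\<lambda>n. s n / sqrt (real (k n)) < c0 * a / (M + 1)) sequentially"
        using order_tendstoD(2)[OF t0] by blast
      show "eventually (\<lambda>n. L A n \<le> ereal (- M)) sequentially"
        using evn1 evs8 ev3
      proof eventually_elim
        case (elim n)
        have "(ln 8 - (c0 * a) * sqrt (real (k n))) / s n \<le> - M"
          by (rule arith1) (use elim spos kpos c0 a M in auto)
        then show ?case using LB[OF elim(1)] by (simp add: mult.assoc order_trans)
      qed
    qed simp
    have Iinf: "I x = \<infinity>" if x: "x \<noteq> 1" for x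
    proof (cases "x > 1")
      case True
      define a where "a = (x - 1) / 2"
      have a: "a > 0" using True by (simp add: a_def)
      define A where "A = {1 + a<..}"
      have Ab: "A \<in> sets borel" unfolding A_def by simp
      have Ai: "interior A = A" unfolding A_def by (rule interior_open) simp
      have xA: "x \<in> A" using True by (simp add: A_def a_def field_simps)
      have "- I x \<le> - (INF y\<in>interior A. I y)" using xA Ai by (simp add: INF_lower)
      also have "\<dots> \<le> liminf (L A)" by (rule low[OF Ab])
      finally have lx: "- I x \<le> liminf (L A)" .
      show ?thesis
      proof (rule to_inf[OF _ Inn])
        fix M :: real assume M: "M > 0"
        have "liminf (L A) \<le> ereal (- M)"
          by (rule key[OF a M]) (rule LU, auto simp: A_def less_imp_le a[THEN less_imp_le])
        then show "- I x \<le> ereal (- M)" using lx by simp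
      qed
    next
      case False
      then have xl: "x < 1" using x by simp
      define a where "a = (1 - x) / 2"
      have a: "a > 0" using xl by (simp add: a_def)
      define A where "A = {..<1 - a}"
      have Ab: "A \<in> sets borel" unfolding A_def by simp
      have Ai: "interior A = A" unfolding A_def by (rule interior_open) simp
      have xA: "x \<in> A" using xl by (simp add: A_def a_def field_simps)
      have "- I x \<le> - (INF y\<in>interior A. I y)" using xA Ai by (simp add: INF_lower)
      also have "\<dots> \<le> liminf (L A)" by (rule low[OF Ab])
      finally have lx: "- I x \<le> liminf (L A)" .
      show ?thesis
      proof (rule to_inf[OF _ Inn])
        fix M :: real assume M: "M > 0"
        have "liminf (L A) \<le> ereal (- M)"
          by (rule key[OF a M]) (rule LL, auto simp: A_def a[THEN less_imp_le])
        then show "- I x \<le> ereal (- M)" using lx by simp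
      qed
    qed
    have "limsup (L UNIV) = 0"
    proof -
      have "eventually (\<lambda>n. L UNIV n = 0) sequentially"
        using evn1
      proof eventually_elim
        case (elim n)
        interpret P: prob_space "\<Omega> n" using prob elim by simp
        show ?case unfolding L_def by (simp add: P.prob_space elog_def)
      qed
      then have "limsup (L UNIV) = limsup (\<lambda>n. 0)" by (rule Limsup_eq)
      then show ?thesis by (simp add: Limsup_const)
    qed
    then have "0 \<le> - (INF x\<in>closure UNIV. I x)" using up[of UNIV] by simp
    then have inf0: "(INF x. I x) \<le> 0" by (simp add: ereal_uminus_le_reorder)
    have "I 1 \<le> (INF x. I x)"
      by (rule INF_greatest) (metis Iinf order_refl top_greatest top_ereal_def)
    then have "I 1 = 0" using inf0 Inn[of 1] by simp
    then have "I = (\<lambda>x. if x = 1 then 0 else \<infinity>)" using Iinf by (auto simp: fun_eq_iff)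
    then show False using asm by blast
  qed
  have part_b: "\<not> ((\<exists>c C. 0 < c \<and> c \<le> C \<and>
                 (\<forall>n\<ge>1. c * sqrt (real (k n)) \<le> s n \<and> s n \<le> C * sqrt (real (k n)))) \<and>
            (\<exists>t0>1. (INF t\<in>{t0<..}. (INF x\<in>{t<..}. I x) / ereal t) = 0))"
  proof
    assume asm: "(\<exists>c C. 0 < c \<and> c \<le> C \<and>
                 (\<forall>n\<ge>1. c * sqrt (real (k n)) \<le> s n \<and> s n \<le> C * sqrt (real (k n)))) \<and>
            (\<exists>t0>1. (INF t\<in>{t0<..}. (INF x\<in>{t<..}. I x) / ereal t) = 0)"
    then obtain c Cc t0 where cC: "0 < c" "c \<le> Cc"
      and sb: "\<And>n. n \<ge> 1 \<Longrightarrow> s n \<le> Cc * sqrt (real (k n))"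
      and t0: "t0 > 1" and inf0: "(INF t\<in>{t0<..}. (INF x\<in>{t<..}. I x) / ereal t) = 0"
      by blast
    have Ccp: "Cc > 0" using cC by simp
    have lim0: "(\<lambda>n. ln 8 / s n - c0 * (t - 1) / Cc) \<longlonglongrightarrow> 0 - c0 * (t - 1) / Cc" for t
    proof (intro tendsto_diff tendsto_const)
      have "(\<lambda>n. ln 8 * inverse (s n)) \<longlonglongrightarrow> ln 8 * 0"
        by (intro tendsto_mult tendsto_const tendsto_inverse_0_at_top slim)
      then show "(\<lambda>n. ln 8 / s n) \<longlonglongrightarrow> 0" by (simp add: divide_inverse)
    qed
    have bnd: "(INF x\<in>{t<..}. I x) \<ge> ereal (c0 * (t - 1) / Cc)" if t: "t > 1" for t
    proof -
      define A where "A = {t<..}"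
      have Ab: "A \<in> sets borel" unfolding A_def by simp
      have Ai: "interior A = A" unfolding A_def by (rule interior_open) simp
      have "liminf (L A) \<le> liminf (\<lambda>n. ereal (ln 8 / s n - c0 * (t - 1) / Cc))"
      proof (rule Liminf_mono)
        show "eventually (\<lambda>n. L A n \<le> ereal (ln 8 / s n - c0 * (t - 1) / Cc)) sequentially"
          using evn1
        proof eventually_elim
          case (elim n)
          have "L A n \<le> ereal ((ln 8 - c0 * (t - 1) * sqrt (real (k n))) / s n)"
            by (rule LU[OF elim]) (use t in \<open>auto simp: A_def\<close>)
          also have "(ln 8 - c0 * (t - 1) * sqrt (real (k n))) / s n \<le> ln 8 / s n - c0 * (t - 1) / Cc"
            by (rule arith2) (use spos kpos sb elim c0 t Ccp in auto)
          finally show ?case by simp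
        qed
      qed
      also have "\<dots> = ereal (0 - c0 * (t - 1) / Cc)"
        by (rule lim_imp_Liminf) (use lim0[of t] in \<open>auto intro: tendsto_ereal\<close>)
      finally have "- (INF x\<in>A. I x) \<le> ereal (- (c0 * (t - 1) / Cc))"
        using low[OF Ab] Ai by simp
      then show ?thesis unfolding A_def by (metis ereal_minus_le_minus uminus_ereal.simps(1))
    qed
    define r0 where "r0 = c0 * (t0 - 1) / Cc / t0"
    have r0: "r0 > 0" using c0 t0 Ccp by (simp add: r0_def)
    have "ereal r0 \<le> (INF t\<in>{t0<..}. (INF x\<in>{t<..}. I x) / ereal t)"
    proof (rule INF_greatest)
      fix t assume "t \<in> {t0<..}"
      then have tt: "t > t0" by simp
      then have t1: "t > 1" "t > 0" using t0 by auto
      have "ereal (c0 * (t - 1) / Cc / t) \<le> (INF x\<in>{t<..}. I x) / ereal t"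
        by (rule ereal_div_ge[OF bnd[OF t1(1)] t1(2)])
      moreover have "r0 \<le> c0 * (t - 1) / Cc / t"
      proof -
        have "(t0 - 1) / t0 \<le> (t - 1) / t" using tt t0 by (simp add: field_simps)
        then have "c0 / Cc * ((t0 - 1) / t0) \<le> c0 / Cc * ((t - 1) / t)"
          using c0 Ccp by (intro mult_left_mono) auto
        then show ?thesis by (simp add: r0_def)
      qed
      ultimately show "ereal r0 \<le> (INF x\<in>{t<..}. I x) / ereal t" by (meson ereal_less_eq(3) order_trans)
    qed
    then show False using inf0 r0 by simp
  qed
  show ?thesis using part_a part_b by blast
qed

end
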